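(* Let $q$ be a power of an odd prime $p$, let $G$ be one of $\mathrm{SL}_2(q)$, $\mathrm{GL}_2(q)$, $\mathrm{PSL}_2(q)$, $\mathrm{PGL}_2(q)$, and let $\mathcal{C}$ be a conjugacy class of non-trivial unipotent elements in $G$. Then $K_{\mathcal{C}}$ is irreducible.
   Context: For a finite group $G$ and a subset $\mathcal{C}\subseteq G\setminus\{1\}$ closed under conjugation, the Killing form $K_{\mathcal{C}}$ is the bilinear form on the complex vector space with basis $\mathcal{C}$ given on basis elements by $K_{\mathcal{C}}(a,b)=|C_G(ab)\cap\mathcal{C}|$. $K_{\mathcal{C}}$ is irreducible if the graph with vertex set $\mathcal{C}$, in which distinct $a,b$ are adjacent iff $C_G(ab)\cap\mathcal{C}\neq\emptyset$, is connected, and reducible otherwise. *)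

theory Defs
  imports "HOL-Analysis.Analysis" "HOL-Algebra.Coset"
begin

definition conj_class :: "('g, 'b) monoid_scheme \<Rightarrow> 'g \<Rightarrow> 'g set" where
  "conj_class G g = {inv\<^bsub>G\<^esub> h \<otimes>\<^bsub>G\<^esub> g \<otimes>\<^bsub>G\<^esub> h | h. h \<in> carrier G}"

definition centralizer_of :: "('g, 'b) monoid_scheme \<Rightarrow> 'g \<Rightarrow> 'g set" where
  "centralizer_of G y = {x \<in> carrier G. x \<otimes>\<^bsub>G\<^esub> y = y \<otimes>\<^bsub>G\<^esub> x}"

definition killing_adj :: "('g, 'b) monoid_scheme \<Rightarrow> 'g set \<Rightarrow> ('g \<times> 'g) set" where
  "killing_adj G C = {(a, b). a \<in> C \<and> b \<in> C \<and> a \<noteq> b \<and>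
      centralizer_of G (a \<otimes>\<^bsub>G\<^esub> b) \<inter> C \<noteq> {}}"

definition killing_irreducible :: "('g, 'b) monoid_scheme \<Rightarrow> 'g set \<Rightarrow> bool" where
  "killing_irreducible G C \<longleftrightarrow> (\<forall>a\<in>C. \<forall>b\<in>C. (a, b) \<in> (killing_adj G C)\<^sup>*)"

definition GL2 :: "('a::field ^ 2 ^ 2) monoid" where
  "GL2 = \<lparr>carrier = {A. det A \<noteq> 0}, mult = (**), one = mat 1\<rparr>"

definition SL2 :: "('a::field ^ 2 ^ 2) monoid" where
  "SL2 = \<lparr>carrier = {A. det A = 1}, mult = (**), one = mat 1\<rparr>"

definition Z_GL2 :: "('a::field ^ 2 ^ 2) set" where
  "Z_GL2 = {mat c | c. c \<noteq> 0}"

definition Z_SL2 :: "('a::field ^ 2 ^ 2) set" where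
  "Z_SL2 = {mat c | c. c * c = 1}"

definition PGL2 :: "('a::field ^ 2 ^ 2) set monoid" where
  "PGL2 = GL2 Mod Z_GL2"

definition PSL2 :: "('a::field ^ 2 ^ 2) set monoid" where
  "PSL2 = SL2 Mod Z_SL2"

definition unipotent_mat :: "'a::field ^ 2 ^ 2 \<Rightarrow> bool" where
  "unipotent_mat A \<longleftrightarrow> (\<exists>n. ((\<lambda>B. (A - mat 1) ** B) ^^ n) (mat 1) = 0)"

definition unipotent_coset :: "('a::field ^ 2 ^ 2) set \<Rightarrow> bool" where
  "unipotent_coset X \<longleftrightarrow> (\<exists>A\<in>X. unipotent_mat A)"

end

theory Submission
  imports Defs "HOL-Number_Theory.Residues"
begin

definition mk :: "'a::field \<Rightarrow> 'a \<Rightarrow> 'a \<Rightarrow> 'a \<Rightarrow> 'a^2^2" where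
  "mk a b c d = (\<chi> i j. if i = 1 then (if j = 1 then a else b) else (if j = 1 then c else d))"

lemma mk_nth[simp]: "mk a b c d $ 1 $ 1 = a" "mk a b c d $ 1 $ 2 = b"
  "mk a b c d $ 2 $ 1 = c" "mk a b c d $ 2 $ 2 = d"
  by (simp_all add: mk_def)

lemma mk_eta: "A = mk (A$1$1) (A$1$2) (A$2$1) (A$2$2)"
  unfolding mk_def by (simp add: vec_eq_iff forall_2)

lemma mk_eq_iff[simp]: "mk a b c d = mk a' b' c' d' \<longleftrightarrow> a = a' \<and> b = b' \<and> c = c' \<and> d = d'"
  unfolding mk_def by (auto simp add: vec_eq_iff forall_2)

lemma mk_mult[simp]: "mk a b c d ** mk a' b' c' d' = mk (a*a'+b*c') (a*b'+b*d') (c*a'+d*c') (c*b'+d*d')"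
  unfolding matrix_matrix_mult_def by (simp add: mk_def vec_eq_iff forall_2 sum_2)

lemma mk_diff[simp]: "mk a b c d - mk a' b' c' d' = mk (a-a') (b-b') (c-c') (d-d')"
  unfolding mk_def by (simp add: vec_eq_iff forall_2)

lemma mat_mk: "mat x = mk x 0 0 x"
  unfolding mk_def by (simp add: vec_eq_iff forall_2 mat_def)

lemma zero_mk: "0 = mk 0 0 0 0"
  unfolding mk_def by (simp add: vec_eq_iff forall_2)

lemma det_mk[simp]: "det (mk a b c d) = a * d - b * c"
  by (simp add: det_2)

definition U :: "'a::field \<Rightarrow> 'a \<Rightarrow> 'a \<Rightarrow> 'a^2^2" where
  "U s p r = mk (1 - s*p*r) (s*p^2) (-(s*r^2)) (1 + s*p*r)"

lemma det_U: "det (U s p r) = 1"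
  by (simp add: U_def algebra_simps power2_eq_square)

lemma U_conj: "mk a b c d ** U s (d*p - b*r) (a*r - c*p) = U (s * (a*d - b*c)) p r ** mk a b c d"
  unfolding U_def
  apply (simp only: mk_mult mk_eq_iff)
  apply (simp add: algebra_simps power2_eq_square)
  done

lemma U_comm: "U s p r ** U t (m*p) (m*r) = U t (m*p) (m*r) ** U s p r"
  unfolding U_def
  apply (simp only: mk_mult mk_eq_iff)
  apply (simp add: algebra_simps power2_eq_square)
  done

lemma mk_add[simp]: "mk a b c d + mk a' b' c' d' = mk (a+a') (b+b') (c+c') (d+d')"
  unfolding mk_def by (simp add: vec_eq_iff forall_2)

lemma U_prod_gen: "U s p r ** U s p' r' = U s (p+p') (r+r') - mat 2 +
   mk ((s*(p*r' - r*p')-2)*(-(1+s*p*r'))) ((s*(p*r' - r*p')-2)*(s*p*p'))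
      ((s*(p*r' - r*p')-2)*(-(s*r*r'))) ((s*(p*r' - r*p')-2)*(s*r*p'-1))"
  unfolding U_def mat_mk
  by (simp add: algebra_simps power2_eq_square)

lemma U_prod: assumes "s*(p*r' - r*p') = 2"
  shows "U s p r ** U s p' r' = U s (p+p') (r+r') - mat 2"
  using U_prod_gen[of s p r p' r'] unfolding assms by (simp flip: zero_mk)

lemma comm_sub_mat: "A ** (A - mat c) = (A - mat c) ** (A::'a::field^2^2)"
proof -
  obtain a b d e where "A = mk a b d e" using mk_eta by blast
  then show ?thesis by (simp add: mat_mk algebra_simps)
qed

lemma U_key: assumes "s*(p*r' - r*p') = 2"
  shows "U s (p+p') (r+r') ** (U s p r ** U s p' r') = (U s p r ** U s p' r') ** U s (p+p') (r+r')"
  unfolding U_prod[OF assms] by (rule comm_sub_mat)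


definition minv :: "'a::field^2^2 \<Rightarrow> 'a^2^2" where
  "minv A = mk (A$2$2/det A) (-(A$1$2)/det A) (-(A$2$1)/det A) (A$1$1/det A)"

lemma minv_mk: "minv (mk a b c d) = mk (d/(a*d-b*c)) (-b/(a*d-b*c)) (-c/(a*d-b*c)) (a/(a*d-b*c))"
  by (simp add: minv_def)

lemma minv_props: assumes "det A \<noteq> 0"
  shows "minv A ** A = mat 1" "A ** minv A = mat 1" "det (minv A) = 1 / det A"
proof -
  obtain a b c d where A: "A = mk a b c d" using mk_eta by blast
  define e where "e = a*d - b*c"
  have e0: "e \<noteq> 0" using assms A by (simp add: e_def)
  have ad: "a*d = e + b*c" by (simp add: e_def)
  show "minv A ** A = mat 1" "A ** minv A = mat 1" 
    unfolding A minv_mk mat_mk e_def[symmetric] using e0 by (simp_all add: field_simps ad mult.commute[of d a])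
  show "det (minv A) = 1 / det A"
    unfolding A minv_mk mat_mk e_def[symmetric] using e0 by (simp add: field_simps ad mult.commute[of d a] e_def[symmetric])
qed

lemma mult_assoc2: "(A ** B) ** C = A ** (B ** (C::'a::field^2^2))"
  by (simp add: matrix_mul_assoc)

lemma GL2_simps[simp]: "carrier GL2 = {A. det A \<noteq> 0}" "monoid.mult GL2 = (**)" "one GL2 = mat 1"
  by (simp_all add: GL2_def)
lemma SL2_simps[simp]: "carrier SL2 = {A. det A = 1}" "monoid.mult SL2 = (**)" "one SL2 = mat 1"
  by (simp_all add: SL2_def)

lemma GL2_group: "group (GL2::('a::field^2^2) monoid)"
proof (rule groupI)
  show "\<exists>y\<in>carrier GL2. y \<otimes>\<^bsub>GL2\<^esub> x = \<one>\<^bsub>GL2\<^esub>" if "x \<in> carrier (GL2::('a::field^2^2) monoid)" for x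
    using that minv_props[of x] by (intro bexI[of _ "minv x"]) auto
qed (auto simp: det_mul matrix_mul_assoc)

lemma SL2_group: "group (SL2::('a::field^2^2) monoid)"
proof (rule groupI)
  show "\<exists>y\<in>carrier SL2. y \<otimes>\<^bsub>SL2\<^esub> x = \<one>\<^bsub>SL2\<^esub>" if "x \<in> carrier (SL2::('a::field^2^2) monoid)" for x
    using that minv_props[of x] by (intro bexI[of _ "minv x"]) auto
qed (auto simp: det_mul matrix_mul_assoc)

lemma inv_GL2: "det A \<noteq> 0 \<Longrightarrow> inv\<^bsub>GL2\<^esub> A = minv A"
  by (rule group.inv_equality[OF GL2_group]) (auto simp: minv_props)

lemma inv_SL2: "det A = 1 \<Longrightarrow> inv\<^bsub>SL2\<^esub> A = minv A"
  by (rule group.inv_equality[OF SL2_group]) (auto simp: minv_props)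

lemma det_mat_sq: "det (mat c :: 'a::field^2^2) = c * c"
  by (simp add: mat_mk)

lemma mat_comm: "mat c ** (A::'a::field^2^2) = A ** (mat c :: 'a::field^2^2)"
proof -
  obtain a b d e where "A = mk a b d e" using mk_eta by blast
  then show ?thesis by (simp add: mat_mk algebra_simps)
qed

lemma mat_mult_mat: "mat a ** mat b = (mat (a*b) :: 'a::field^2^2)"
  by (simp add: mat_mk)

lemma Z_SL2_normal: "Z_SL2 \<lhd> (SL2::('a::field^2^2) monoid)"
proof (rule group.normal_invI[OF SL2_group])
  show "subgroup Z_SL2 (SL2::('a::field^2^2) monoid)"
  proof (rule group.subgroupI[OF SL2_group])
    show "Z_SL2 \<subseteq> carrier (SL2::('a::field^2^2) monoid)" by (auto simp: Z_SL2_def det_mat_sq)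
    show "Z_SL2 \<noteq> {}" unfolding Z_SL2_def by (auto intro!: exI[of _ 1])
    show "inv\<^bsub>SL2\<^esub> a \<in> Z_SL2" if "a \<in> Z_SL2" for a :: "'a^2^2"
    proof -
      from that obtain c where c: "a = mat c" "c*c = 1" by (auto simp: Z_SL2_def)
      then have "inv\<^bsub>SL2\<^esub> a = mat c" using inv_SL2[of a] by (simp add: det_mat_sq minv_def mat_mk)
      then show ?thesis using c by (auto simp: Z_SL2_def)
    qed
    show "a \<otimes>\<^bsub>SL2\<^esub> b \<in> Z_SL2" if "a \<in> Z_SL2" "b \<in> Z_SL2" for a b :: "'a^2^2"
      using that by (auto simp: Z_SL2_def mat_mult_mat algebra_simps)
  qed
  show "x \<otimes>\<^bsub>SL2\<^esub> h \<otimes>\<^bsub>SL2\<^esub> inv\<^bsub>SL2\<^esub> x \<in> Z_SL2" if "x \<in> carrier SL2" "h \<in> Z_SL2" for x h :: "'a^2^2"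
  proof -
    from that obtain c where c: "h = mat c" "c*c = 1" by (auto simp: Z_SL2_def)
    have "x ** h ** minv x = h ** (x ** minv x)" by (simp add: c mat_comm matrix_mul_assoc)
    also have "\<dots> = h" using minv_props[of x] that by simp
    finally show ?thesis using that inv_SL2[of x] c by (auto simp: Z_SL2_def)
  qed
qed

lemma Z_GL2_normal: "Z_GL2 \<lhd> (GL2::('a::field^2^2) monoid)"
proof (rule group.normal_invI[OF GL2_group])
  show "subgroup Z_GL2 (GL2::('a::field^2^2) monoid)"
  proof (rule group.subgroupI[OF GL2_group])
    show "Z_GL2 \<subseteq> carrier (GL2::('a::field^2^2) monoid)" by (auto simp: Z_GL2_def det_mat_sq)
    show "Z_GL2 \<noteq> {}" unfolding Z_GL2_def by (auto intro!: exI[of _ 1])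
    show "inv\<^bsub>GL2\<^esub> a \<in> Z_GL2" if "a \<in> Z_GL2" for a :: "'a^2^2"
    proof -
      from that obtain c where c: "a = mat c" "c \<noteq> 0" by (auto simp: Z_GL2_def)
      then have "inv\<^bsub>GL2\<^esub> a = mat (1/c)" using inv_GL2[of a] by (simp add: det_mat_sq minv_def mat_mk)
      then show ?thesis using c by (auto simp: Z_GL2_def)
    qed
    show "a \<otimes>\<^bsub>GL2\<^esub> b \<in> Z_GL2" if "a \<in> Z_GL2" "b \<in> Z_GL2" for a b :: "'a^2^2"
      using that by (auto simp: Z_GL2_def mat_mult_mat)
  qed
  show "x \<otimes>\<^bsub>GL2\<^esub> h \<otimes>\<^bsub>GL2\<^esub> inv\<^bsub>GL2\<^esub> x \<in> Z_GL2" if "x \<in> carrier GL2" "h \<in> Z_GL2" for x h :: "'a^2^2"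
  proof -
    from that obtain c where c: "h = mat c" "c \<noteq> 0" by (auto simp: Z_GL2_def)
    have "x ** h ** minv x = h ** (x ** minv x)" by (simp add: c mat_comm matrix_mul_assoc)
    also have "\<dots> = h" using minv_props[of x] that by simp
    finally show ?thesis using that inv_GL2[of x] c by (auto simp: Z_GL2_def)
  qed
qed


lemma comm_assoc: "A ** B = C ** (D::'a::field^2^2) \<Longrightarrow> A ** (B ** X) = C ** (D ** X)"
  by (simp add: matrix_mul_assoc)

lemma conj_U: assumes "det h \<noteq> 0"
  shows "minv h ** U s p r ** h = U (s / det h) (h$2$2*p - h$1$2*r) (h$1$1*r - h$2$1*p)"
proof -
  obtain a b c d where h: "h = mk a b c d" using mk_eta by blast
  have e: "a*d - b*c \<noteq> 0" using assms h by simp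
  have "h ** U (s / det h) (h$2$2*p - h$1$2*r) (h$1$1*r - h$2$1*p) = U s p r ** h"
    using U_conj[of a b c d "s / det h" p r] e by (simp add: h)
  then have "minv h ** U s p r ** h = minv h ** (h ** U (s / det h) (h$2$2*p - h$1$2*r) (h$1$1*r - h$2$1*p))"
    by (simp add: matrix_mul_assoc)
  also have "\<dots> = U (s / det h) (h$2$2*p - h$1$2*r) (h$1$1*r - h$2$1*p)"
    by (simp add: matrix_mul_assoc minv_props assms)
  finally show ?thesis .
qed

lemma adj_nonzero: assumes "a*d - b*c \<noteq> 0" "(p, r) \<noteq> (0, 0)"
  shows "(d*p - b*r, a*r - c*p) \<noteq> (0::'a::field, 0)"
proof
  assume h: "(d*p - b*r, a*r - c*p) = (0, 0)"
  have "p * (a*d - b*c) = a*(d*p - b*r) + b*(a*r - c*p)" by (simp add: algebra_simps)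
  moreover have "r * (a*d - b*c) = c*(d*p - b*r) + d*(a*r - c*p)" by (simp add: algebra_simps)
  ultimately have "p = 0" "r = 0" using h assms(1) by auto
  then show False using assms(2) by simp
qed

definition Pm :: "'a::field \<Rightarrow> 'a \<Rightarrow> 'a^2^2" where
  "Pm p r = (if p \<noteq> 0 then mk p 0 r (1/p) else mk 0 (-1/r) r 0)"

lemma Pm_props: assumes "(p, r) \<noteq> (0, 0)"
  shows "det (Pm p r) = 1" "Pm p r ** U t 1 0 = U t p r ** Pm p r"
  using assms unfolding Pm_def U_def by (auto simp: field_simps power2_eq_square)

lemma diag_U: "mk m 0 0 1 ** U t 1 0 = U (t*m) 1 0 ** mk m 0 0 1"
  unfolding U_def by (simp add: algebra_simps)

lemma conj_exists: assumes "s \<noteq> 0" "t \<noteq> 0" "(p0, r0) \<noteq> (0, 0)" "(p, r) \<noteq> (0, 0)"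
  shows "\<exists>h. det h = s / t \<and> minv h ** U s p0 r0 ** h = U t p r"
proof -
  define P where "P = Pm p r"
  define P0 where "P0 = Pm p0 r0"
  define D :: "'a^2^2" where "D = mk (s/t) 0 0 1"
  define h where "h = P0 ** D ** minv P"
  have dP: "det P = 1" "det P0 = 1" using Pm_props assms by (auto simp: P_def P0_def)
  have dh: "det h = s / t" unfolding h_def by (simp add: det_mul dP minv_props D_def)
  have c1: "minv P ** U t p r = U t 1 0 ** minv P"
  proof -
    have "minv P ** U t p r = minv P ** U t p r ** (P ** minv P)" by (simp add: minv_props dP)
    also have "\<dots> = minv P ** (U t p r ** P) ** minv P" by (simp add: matrix_mul_assoc)
    also have "\<dots> = minv P ** (P ** U t 1 0) ** minv P" using Pm_props(2)[OF assms(4), of t] by (simp add: P_def)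
    also have "\<dots> = U t 1 0 ** minv P" by (simp add: matrix_mul_assoc minv_props dP)
    finally show ?thesis .
  qed
  have c2: "D ** U t 1 0 = U s 1 0 ** D" using diag_U[of "s/t" t] assms by (simp add: D_def)
  have c3: "P0 ** U s 1 0 = U s p0 r0 ** P0" using Pm_props(2)[OF assms(3), of s] by (simp add: P0_def)
  have "h ** U t p r = U s p0 r0 ** h"
    unfolding h_def by (simp flip: matrix_mul_assoc add: c1 comm_assoc[OF c1] comm_assoc[OF c2] comm_assoc[OF c3])
  then have "minv h ** U s p0 r0 ** h = minv h ** (h ** U t p r)" by (simp add: matrix_mul_assoc)
  also have "\<dots> = U t p r" using dh assms by (simp add: matrix_mul_assoc minv_props)
  finally show ?thesis using dh by blast
qed


lemma SL2_class: assumes "s \<noteq> 0" "(p0, r0) \<noteq> (0, 0)"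
  shows "conj_class SL2 (U s p0 r0) = {U s p r | p r. (p, r) \<noteq> (0::'a::field, 0)}"
proof
  show "conj_class SL2 (U s p0 r0) \<subseteq> {U s p r | p r. (p, r) \<noteq> (0::'a, 0)}"
  proof
    fix x assume "x \<in> conj_class SL2 (U s p0 r0)"
    then obtain h :: "'a^2^2" where h: "det h = 1" "x = inv\<^bsub>SL2\<^esub> h \<otimes>\<^bsub>SL2\<^esub> U s p0 r0 \<otimes>\<^bsub>SL2\<^esub> h"
      by (auto simp: conj_class_def)
    then have "x = U s (h$2$2*p0 - h$1$2*r0) (h$1$1*r0 - h$2$1*p0)"
      using conj_U[of h s p0 r0] by (simp add: inv_SL2)
    moreover have "h$1$1*h$2$2 - h$1$2*h$2$1 \<noteq> 0" using h(1) by (simp add: det_2)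
    then have "(h$2$2*p0 - h$1$2*r0, h$1$1*r0 - h$2$1*p0) \<noteq> (0, 0)"
      using adj_nonzero[OF _ assms(2)] by blast
    ultimately show "x \<in> {U s p r | p r. (p, r) \<noteq> (0::'a, 0)}" by blast
  qed
  show "{U s p r | p r. (p, r) \<noteq> (0::'a, 0)} \<subseteq> conj_class SL2 (U s p0 r0)"
  proof
    fix x assume "x \<in> {U s p r | p r. (p, r) \<noteq> (0::'a, 0)}"
    then obtain p r where x: "x = U s p r" "(p, r) \<noteq> (0::'a, 0)" by blast
    obtain h where h: "det h = s / s" "minv h ** U s p0 r0 ** h = U s p r"
      using conj_exists[OF assms(1) assms(1) assms(2) x(2)] by blast
    then have "det h = 1" using assms by simp
    then show "x \<in> conj_class SL2 (U s p0 r0)" unfolding conj_class_def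
      using h x by (auto simp: inv_SL2 intro!: exI[of _ h])
  qed
qed

lemma GL2_class: assumes "s \<noteq> 0" "(p0, r0) \<noteq> (0, 0)"
  shows "conj_class GL2 (U s p0 r0) = {U t p r | t p r. t \<noteq> 0 \<and> (p, r) \<noteq> (0::'a::field, 0)}"
proof
  show "conj_class GL2 (U s p0 r0) \<subseteq> {U t p r | t p r. t \<noteq> 0 \<and> (p, r) \<noteq> (0::'a, 0)}"
  proof
    fix x assume "x \<in> conj_class GL2 (U s p0 r0)"
    then obtain h :: "'a^2^2" where h: "det h \<noteq> 0" "x = inv\<^bsub>GL2\<^esub> h \<otimes>\<^bsub>GL2\<^esub> U s p0 r0 \<otimes>\<^bsub>GL2\<^esub> h"
      by (auto simp: conj_class_def)
    then have "x = U (s / det h) (h$2$2*p0 - h$1$2*r0) (h$1$1*r0 - h$2$1*p0)"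
      using conj_U[of h s p0 r0] by (simp add: inv_GL2)
    moreover have "h$1$1*h$2$2 - h$1$2*h$2$1 \<noteq> 0" using h(1) by (simp add: det_2)
    then have "(h$2$2*p0 - h$1$2*r0, h$1$1*r0 - h$2$1*p0) \<noteq> (0, 0)"
      using adj_nonzero[OF _ assms(2)] by blast
    moreover have "s / det h \<noteq> 0" using h assms by simp
    ultimately show "x \<in> {U t p r | t p r. t \<noteq> 0 \<and> (p, r) \<noteq> (0::'a, 0)}" by blast
  qed
  show "{U t p r | t p r. t \<noteq> 0 \<and> (p, r) \<noteq> (0::'a, 0)} \<subseteq> conj_class GL2 (U s p0 r0)"
  proof
    fix x assume "x \<in> {U t p r | t p r. t \<noteq> 0 \<and> (p, r) \<noteq> (0::'a, 0)}"
    then obtain t p r where x: "x = U t p r" "t \<noteq> 0" "(p, r) \<noteq> (0::'a, 0)" by blast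
    obtain h where h: "det h = s / t" "minv h ** U s p0 r0 ** h = U t p r"
      using conj_exists[OF assms(1) x(2) assms(2) x(3)] by blast
    then have "det h \<noteq> 0" using assms x by simp
    then show "x \<in> conj_class GL2 (U s p0 r0)" unfolding conj_class_def
      using h x by (auto simp: inv_GL2 intro!: exI[of _ h])
  qed
qed

lemma adj_step:
  assumes "x \<in> C" "y \<in> C" "c \<in> C" "c \<in> carrier G" "c \<otimes>\<^bsub>G\<^esub> (x \<otimes>\<^bsub>G\<^esub> y) = (x \<otimes>\<^bsub>G\<^esub> y) \<otimes>\<^bsub>G\<^esub> c"
  shows "(x, y) \<in> (killing_adj G C)\<^sup>*"
proof (cases "x = y")
  case False
  then have "(x, y) \<in> killing_adj G C" using assms
    unfolding killing_adj_def centralizer_of_def by blast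
  then show ?thesis by blast
qed simp

lemma comm_step:
  assumes "monoid.mult G = (**)" "C \<subseteq> carrier G" "x \<in> C" "y \<in> C" "x ** y = y ** (x::'a::field^2^2)"
  shows "(x, y) \<in> (killing_adj G C)\<^sup>*"
  apply (rule adj_step[of x C y x])
  using assms by (auto simp: matrix_mul_assoc)

lemma path_U:
  fixes s :: "'a::field"
  assumes G: "monoid.mult G = (**)" "C \<subseteq> carrier G" and s: "s \<noteq> 0" and two: "(2::'a) \<noteq> 0"
    and inC: "\<And>p r. (p, r) \<noteq> (0, 0) \<Longrightarrow> U s p r \<in> C"
    and nz: "(p, r) \<noteq> (0, 0)" "(p', r') \<noteq> (0, 0)"
  shows "(U s p r, U s p' r') \<in> (killing_adj G C)\<^sup>*"
proof (cases "p*r' - r*p' = 0")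
  case True
  obtain m where m: "p' = m*p" "r' = m*r"
  proof (cases "p = 0")
    case True
    then have "r \<noteq> 0" using nz by auto
    then have "p' = 0" using \<open>p*r' - r*p' = 0\<close> True by simp
    then show ?thesis using that[of "r'/r"] \<open>r \<noteq> 0\<close> True by simp
  next
    case False
    have "r' = r * p' / p" using \<open>p*r' - r*p' = 0\<close> False by (simp add: field_simps)
    then show ?thesis using that[of "p'/p"] False by simp
  qed
  show ?thesis
    apply (rule comm_step[OF G])
    using inC nz U_comm[of s p r s m] m by auto
next
  case False
  define d where "d = p*r' - r*p'"
  have d: "d \<noteq> 0" using False d_def by simp
  define l where "l = 2 / (s*d)"
  have l: "l \<noteq> 0" using d s two by (simp add: l_def)
  have nz': "(l*p, l*r) \<noteq> (0, 0)" using l nz by auto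
  have 1: "(U s p r, U s (l*p) (l*r)) \<in> (killing_adj G C)\<^sup>*"
    apply (rule comm_step[OF G])
    using inC nz nz' U_comm[of s p r s l] by auto
  have e1: "(l*p)*r' - (l*r)*p' = l*d" by (simp add: d_def algebra_simps)
  have e2: "s * (l*d) = 2" using d s unfolding l_def by (simp add: field_simps)
  have key: "s * ((l*p)*r' - (l*r)*p') = 2" using e1 e2 by simp
  have nz'': "(l*p + p', l*r + r') \<noteq> (0, 0)"
  proof
    assume "(l*p + p', l*r + r') = (0, 0)"
    then have "p' = -(l*p)" "r' = -(l*r)" by (auto simp: add_eq_0_iff)
    then have "d = 0" unfolding d_def by (simp add: algebra_simps)
    with d show False by simp
  qed
  have 2: "(U s (l*p) (l*r), U s p' r') \<in> (killing_adj G C)\<^sup>*"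
    apply (rule adj_step[of _ C _ "U s (l*p + p') (l*r + r')"])
    using inC nz nz' nz'' G U_key[OF key] by auto
  show ?thesis using 1 2 by (rule rtrancl_trans)
qed


lemma SL2_irred: assumes "s \<noteq> 0" "(p0, r0) \<noteq> (0, 0)" "(2::'a::field) \<noteq> 0"
  shows "killing_irreducible SL2 (conj_class SL2 (U s p0 r0 :: 'a^2^2))"
proof -
  let ?C = "conj_class SL2 (U s p0 r0 :: 'a^2^2)"
  have C: "?C = {U s p r | p r. (p, r) \<noteq> (0::'a, 0)}" by (rule SL2_class[OF assms(1,2)])
  have sub: "?C \<subseteq> carrier SL2" unfolding C by (auto simp: det_U)
  have inC: "\<And>p r. (p, r) \<noteq> (0, 0) \<Longrightarrow> U s p r \<in> ?C" unfolding C by blast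
  show ?thesis unfolding killing_irreducible_def
  proof (intro ballI)
    fix a b assume "a \<in> ?C" "b \<in> ?C"
    then obtain p r p' r' where "a = U s p r" "(p, r) \<noteq> (0, 0)" "b = U s p' r'" "(p', r') \<noteq> (0, 0)"
      unfolding C by blast
    then show "(a, b) \<in> (killing_adj SL2 ?C)\<^sup>*"
      using path_U[of SL2 ?C s, OF _ sub assms(1) assms(3) inC] by simp
  qed
qed

lemma GL2_irred: assumes "s \<noteq> 0" "(p0, r0) \<noteq> (0, 0)" "(2::'a::field) \<noteq> 0"
  shows "killing_irreducible GL2 (conj_class GL2 (U s p0 r0 :: 'a^2^2))"
proof -
  let ?C = "conj_class GL2 (U s p0 r0 :: 'a^2^2)"
  have C: "?C = {U t p r | t p r. t \<noteq> 0 \<and> (p, r) \<noteq> (0::'a, 0)}" by (rule GL2_class[OF assms(1,2)])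
  have sub: "?C \<subseteq> carrier GL2" unfolding C by (auto simp: det_U)
  have inC: "\<And>t p r. t \<noteq> 0 \<Longrightarrow> (p, r) \<noteq> (0, 0) \<Longrightarrow> U t p r \<in> ?C" unfolding C by blast
  show ?thesis unfolding killing_irreducible_def
  proof (intro ballI)
    fix a b assume "a \<in> ?C" "b \<in> ?C"
    then obtain t p r t' p' r' where ab: "a = U t p r" "t \<noteq> 0" "(p, r) \<noteq> (0, 0)" 
        "b = U t' p' r'" "t' \<noteq> 0" "(p', r') \<noteq> (0, 0)"
      unfolding C by blast
    have 1: "(a, U t' p r) \<in> (killing_adj GL2 ?C)\<^sup>*"
      apply (rule comm_step[of GL2 ?C])
      using sub inC ab U_comm[of t p r t' 1] by auto
    have 2: "(U t' p r, b) \<in> (killing_adj GL2 ?C)\<^sup>*"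
      using path_U[of GL2 ?C t', OF _ sub ab(5) assms(3)] inC ab by simp
    show "(a, b) \<in> (killing_adj GL2 ?C)\<^sup>*" using 1 2 by (rule rtrancl_trans)
  qed
qed

lemma nilp_pow:
  fixes a b c d :: "'a::field"
  assumes "a*d - b*c = 0"
  shows "((\<lambda>B. mk a b c d ** B) ^^ Suc n) (mat 1) = mk ((a+d)^n*a) ((a+d)^n*b) ((a+d)^n*c) ((a+d)^n*d)"
proof (induction n)
  case 0
  then show ?case by (simp add: mat_mk)
next
  case (Suc n)
  have bc: "b*c = a*d" using assms by simp
  show ?case using Suc by (simp add: algebra_simps bc)
qed

lemma nonnilp_pow:
  fixes N :: "'a::field^2^2"
  shows "det (((\<lambda>B. N ** B) ^^ n) (mat 1)) = det N ^ n"
  by (induction n) (simp_all add: det_mul det_I)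

lemma unipotent_U:
  fixes g :: "'a::field^2^2"
  assumes "unipotent_mat g" "g \<noteq> mat 1"
  shows "\<exists>s p r. s \<noteq> 0 \<and> (p, r) \<noteq> (0, 0) \<and> g = U s p r"
proof -
  obtain a b c d where N: "g - mat 1 = mk a b c d" using mk_eta by blast
  have g: "g = mk (1+a) b c (1+d)"
  proof -
    have "g = mk a b c d + mat 1" using N by (metis diff_add_cancel)
    then show ?thesis unfolding mat_mk by (simp add: add.commute)
  qed
  have Nnz: "mk a b c d \<noteq> 0" using assms(2) N by auto
  obtain n where n: "((\<lambda>B. mk a b c d ** B) ^^ n) (mat 1) = 0" using assms(1) N unfolding unipotent_mat_def by auto
  have det0: "a*d - b*c = 0"
  proof (rule ccontr)
    assume "a*d - b*c \<noteq> 0"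
    then have "det (((\<lambda>B. mk a b c d ** B) ^^ n) (mat 1)) \<noteq> 0" by (simp add: nonnilp_pow)
    then show False using n by (simp add: zero_mk)
  qed
  have tr: "a + d = 0"
  proof (cases n)
    case 0
    then show ?thesis using n by (simp add: mat_mk zero_mk)
  next
    case (Suc m)
    then have "mk ((a+d)^m*a) ((a+d)^m*b) ((a+d)^m*c) ((a+d)^m*d) = mk 0 0 0 0"
      using n nilp_pow[OF det0, of m] by (simp add: zero_mk)
    then have "(a+d)^m = 0" using Nnz by (auto simp: zero_mk)
    then show ?thesis by simp
  qed
  then have d: "d = -a" by (simp add: add_eq_0_iff)
  have bc: "b*c = -(a*a)" using det0 d by simp
  show ?thesis
  proof (cases "b = 0")
    case True
    then have "a = 0" using bc by simp
    then have "c \<noteq> 0" using Nnz True d by (auto simp: zero_mk)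
    then show ?thesis using True \<open>a = 0\<close> d
      by (intro exI[of _ "-c"] exI[of _ 0] exI[of _ 1]) (simp add: g U_def)
  next
    case False
    have c: "c = -(a*a)/b" using bc False by (simp add: field_simps)
    show ?thesis using False d
      by (intro exI[of _ b] exI[of _ 1] exI[of _ "-a/b"]) (simp add: g U_def c field_simps power2_eq_square)
  qed
qed


lemma conj_class_carrier: "group G \<Longrightarrow> g \<in> carrier G \<Longrightarrow> conj_class G g \<subseteq> carrier G"
  unfolding conj_class_def by (auto intro!: monoid.m_closed group.is_monoid group.inv_closed)

lemma quot_class:
  fixes G (structure)
  assumes N: "N \<lhd> G" and g: "g \<in> carrier G"
  shows "conj_class (G Mod N) (r_coset G N g) = (\<lambda>x. r_coset G N x) ` conj_class G g"
proof -
  interpret normal N G by (rule N)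
  have e: "inv\<^bsub>G Mod N\<^esub> (r_coset G N h) \<otimes>\<^bsub>G Mod N\<^esub> r_coset G N g \<otimes>\<^bsub>G Mod N\<^esub> r_coset G N h
      = r_coset G N (inv h \<otimes> g \<otimes> h)" if h: "h \<in> carrier G" for h
  proof -
    have "inv\<^bsub>G Mod N\<^esub> (r_coset G N h) = r_coset G N (inv h)"
      using inv_FactGroup[of "r_coset G N h"] rcos_inv[OF h] h by (simp add: carrier_FactGroup)
    then show ?thesis using h g by (simp add: rcos_sum)
  qed
  show ?thesis
    unfolding conj_class_def carrier_FactGroup using e by auto
qed

lemma rtrancl_map:
  assumes "(x, y) \<in> R\<^sup>*" "\<And>u v. (u, v) \<in> R \<Longrightarrow> (f u, f v) \<in> S\<^sup>*"
  shows "(f x, f y) \<in> S\<^sup>*"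
  using assms(1)
proof (induction rule: rtrancl_induct)
  case (step y z)
  then show ?case using assms(2) rtrancl_trans by metis
qed simp

lemma quot_irred:
  fixes G (structure)
  assumes N: "N \<lhd> G" and g: "g \<in> carrier G" and irr: "killing_irreducible G (conj_class G g)"
  shows "killing_irreducible (G Mod N) (conj_class (G Mod N) (r_coset G N g))"
proof -
  interpret normal N G by (rule N)
  let ?C = "conj_class G g"
  let ?f = "\<lambda>x. r_coset G N x"
  have Csub: "?C \<subseteq> carrier G" by (rule conj_class_carrier[OF is_group g])
  have C': "conj_class (G Mod N) (r_coset G N g) = ?f ` ?C" by (rule quot_class[OF N g])
  have step: "(?f u, ?f v) \<in> (killing_adj (G Mod N) (?f ` ?C))\<^sup>*" if "(u, v) \<in> killing_adj G ?C" for u v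
  proof -
    from that obtain c where uv: "u \<in> ?C" "v \<in> ?C" "c \<in> ?C" "c \<otimes> (u \<otimes> v) = (u \<otimes> v) \<otimes> c"
      unfolding killing_adj_def centralizer_of_def by blast
    have cc: "u \<in> carrier G" "v \<in> carrier G" "c \<in> carrier G" using uv Csub by auto
    show ?thesis
    proof (rule adj_step[of _ _ _ "?f c"])
      show "?f u \<in> ?f ` ?C" "?f v \<in> ?f ` ?C" "?f c \<in> ?f ` ?C" using uv by auto
      show "?f c \<in> carrier (G Mod N)" using cc by (simp add: carrier_FactGroup)
      show "?f c \<otimes>\<^bsub>G Mod N\<^esub> (?f u \<otimes>\<^bsub>G Mod N\<^esub> ?f v) = (?f u \<otimes>\<^bsub>G Mod N\<^esub> ?f v) \<otimes>\<^bsub>G Mod N\<^esub> ?f c"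
        using cc uv(4) by (simp add: rcos_sum)
    qed
  qed
  show ?thesis unfolding killing_irreducible_def C'
  proof (intro ballI)
    fix X Y assume "X \<in> ?f ` ?C" "Y \<in> ?f ` ?C"
    then obtain a b where ab: "a \<in> ?C" "b \<in> ?C" "X = ?f a" "Y = ?f b" by blast
    have "(a, b) \<in> (killing_adj G ?C)\<^sup>*" using irr ab unfolding killing_irreducible_def by blast
    then show "(X, Y) \<in> (killing_adj (G Mod N) (?f ` ?C))\<^sup>*"
      unfolding ab(3,4) by (rule rtrancl_map) (rule step)
  qed
qed


lemma quot_case:
  fixes G (structure)
  assumes N: "N \<lhd> G" and X: "X \<in> carrier (G Mod N)" "A \<in> X" "X \<noteq> N" "P A"
    and H: "\<And>A. A \<in> carrier G \<Longrightarrow> P A \<Longrightarrow> A \<noteq> \<one> \<Longrightarrow> killing_irreducible G (conj_class G A)"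
  shows "killing_irreducible (G Mod N) (conj_class (G Mod N) X)"
proof -
  interpret normal N G by (rule N)
  obtain h where h: "h \<in> carrier G" "X = N #> h" using X(1) by (auto simp: carrier_FactGroup)
  have sg: "subgroup N G" by (rule normal_imp_subgroup[OF N])
  have Ac: "A \<in> carrier G" using r_coset_subset_G[OF subset h(1)] X(2) h(2) by blast
  have XA: "X = N #> A" using repr_independence[OF _ h(1) sg] X(2) h(2) by simp
  have A1: "A \<noteq> \<one>" using X(3) XA coset_mult_one[OF subset] by auto
  show ?thesis unfolding XA by (rule quot_irred[OF N Ac H[OF Ac X(4) A1]])
qed

lemma two_ne:
  fixes p k :: nat
  assumes "prime p" and "odd p" and "CARD('a::{field,finite}) = p ^ k"
  shows "(2::'a) \<noteq> 0"
proof
  assume "(2::'a) = 0"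
  then have "of_nat 2 = (0::'a)" by simp
  then have "CHAR('a) dvd 2" by (simp only: of_nat_eq_0_iff_char_dvd)
  moreover have "CHAR('a) \<noteq> 1" using CHAR_not_1[where 'a='a] by simp
  moreover have "CHAR('a) \<noteq> 0"
    using CHAR_dvd_CARD[where 'a='a] by (metis dvd_0_left_iff finite_UNIV_card_ge_0 finite_class.finite_UNIV less_irrefl)
  moreover have "CHAR('a) \<le> 2" using \<open>CHAR('a) dvd 2\<close> dvd_imp_le[of "CHAR('a)" 2] by simp
  ultimately have "CHAR('a) = 2" by linarith
  then have "2 dvd p ^ k" using CHAR_dvd_CARD[where 'a='a] assms(3) by simp
  then have "2 dvd p" using prime_dvd_power[of 2 p k] by (simp add: prime_nat_iff)
  then show False using assms(2) by simp
qed

theorem corollary3p5: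
  fixes p k :: nat
  assumes "prime p" and "odd p" and "k \<ge> 1" and "CARD('a::{field,finite}) = p ^ k"
  shows "(\<forall>g \<in> carrier (SL2 :: ('a ^ 2 ^ 2) monoid). unipotent_mat g \<and> g \<noteq> \<one>\<^bsub>SL2\<^esub> \<longrightarrow>
            killing_irreducible SL2 (conj_class SL2 g))
       \<and> (\<forall>g \<in> carrier (GL2 :: ('a ^ 2 ^ 2) monoid). unipotent_mat g \<and> g \<noteq> \<one>\<^bsub>GL2\<^esub> \<longrightarrow>
            killing_irreducible GL2 (conj_class GL2 g))
       \<and> (\<forall>X \<in> carrier (PSL2 :: ('a ^ 2 ^ 2) set monoid). unipotent_coset X \<and> X \<noteq> \<one>\<^bsub>PSL2\<^esub> \<longrightarrow>
            killing_irreducible PSL2 (conj_class PSL2 X))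
       \<and> (\<forall>X \<in> carrier (PGL2 :: ('a ^ 2 ^ 2) set monoid). unipotent_coset X \<and> X \<noteq> \<one>\<^bsub>PGL2\<^esub> \<longrightarrow>
            killing_irreducible PGL2 (conj_class PGL2 X))"
proof -
  have two: "(2::'a) \<noteq> 0" by (rule two_ne[OF assms(1,2,4)])
  have S: "killing_irreducible SL2 (conj_class SL2 g)"
    if that': "g \<in> carrier (SL2 :: ('a ^ 2 ^ 2) monoid)" "unipotent_mat g" "g \<noteq> \<one>\<^bsub>SL2\<^esub>" for g
  proof -
    obtain s p r where "s \<noteq> 0" "(p, r) \<noteq> (0, 0)" "g = U s p r" using unipotent_U[of g] that' by auto
    then show ?thesis using SL2_irred two by simp
  qed
  have G: "killing_irreducible GL2 (conj_class GL2 g)"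
    if that': "g \<in> carrier (GL2 :: ('a ^ 2 ^ 2) monoid)" "unipotent_mat g" "g \<noteq> \<one>\<^bsub>GL2\<^esub>" for g
  proof -
    obtain s p r where "s \<noteq> 0" "(p, r) \<noteq> (0, 0)" "g = U s p r" using unipotent_U[of g] that' by auto
    then show ?thesis using GL2_irred two by simp
  qed
  have PS: "killing_irreducible PSL2 (conj_class PSL2 X)"
    if that': "X \<in> carrier (PSL2 :: ('a ^ 2 ^ 2) set monoid)" "unipotent_coset X" "X \<noteq> \<one>\<^bsub>PSL2\<^esub>" for X
  proof -
    obtain A where A: "A \<in> X" "unipotent_mat A" using that'(2) unfolding unipotent_coset_def by blast
    show ?thesis unfolding PSL2_def
      by (rule quot_case[where P=unipotent_mat, OF Z_SL2_normal _ A(1) _ A(2) S]) (use that' in \<open>auto simp: PSL2_def\<close>)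
  qed
  have PG: "killing_irreducible PGL2 (conj_class PGL2 X)"
    if that': "X \<in> carrier (PGL2 :: ('a ^ 2 ^ 2) set monoid)" "unipotent_coset X" "X \<noteq> \<one>\<^bsub>PGL2\<^esub>" for X
  proof -
    obtain A where A: "A \<in> X" "unipotent_mat A" using that'(2) unfolding unipotent_coset_def by blast
    show ?thesis unfolding PGL2_def
      by (rule quot_case[where P=unipotent_mat, OF Z_GL2_normal _ A(1) _ A(2) G]) (use that' in \<open>auto simp: PGL2_def\<close>)
  qed
  show ?thesis using S G PS PG by blast
qed

end
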